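(* Assume $CA_3$. Then there is a coloring $c:[\omega_1]^2\to\omega_1$ such that: (1) $c$ is $2$-bounded; (2) $c$ has no uncountable injective set; (3) $c$ is ccc-destructible, i.e. there is a ccc partial order forcing that $c$ has an uncountable injective set.
   Context: A coloring $c:[\omega_1]^2\to\omega_1$ is $2$-bounded if $|c^{-1}[\{\xi\}]|\le2$ for every $\xi\in\omega_1$. A set $A\subseteq\omega_1$ is injective (for $c$) if $c|_{[A]^2}$ is injective. A type is a sequence $\tau=\{(m_k,n_{k+1},r_{k+1})\}_{k\in\omega}$ of natural numbers with $m_0=1$; $n_k\ge2$ for $k\ge1$; every $r\in\omega$ equals $r_k$ for infinitely many $k$; $m_k>r_{k+1}$; and $m_{k+1}=r_{k+1}+(m_k-r_{k+1})n_{k+1}$ for all $k$. For a set of ordinals $X$ and $\mathcal F\subseteq[X]^{<\omega}$, $\mathcal F_k$ is the set of elements of rank $k$ in $(\mathcal F,\subsetneq)$; $A\sqsubseteq B$ means $A\subseteq B$ and every element of $B$ below an element of $A$ is in $A$; $A<B$ means every element of $A$ is below every element of $B$. $\mathcal F$ is a construction scheme over $X$ of type $\tau$ if (1) every finite subset of $X$ lies in a member of $\mathcal F$; (2) $|F|=m_k$ for $F\in\mathcal F_k$; (3) $E\cap F\sqsubseteq E,F$ for $E,F\in\mathcal F_k$; (4) each $F\in\mathcal F_{k+1}$ is the union of uniquely determined $F_0,\dots,F_{n_{k+1}-1}\in\mathcal F_k$ forming a $\Delta$-system with root $R(F)$, $|R(F)|=r_{k+1}$, $R(F)<F_0\setminus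 R(F)<\dots<F_{n_{k+1}-1}\setminus R(F)$. For a construction scheme $\mathcal F$ over $\omega_1$, $l\ge1$, $F\in\mathcal F_l$ and finite $\mathcal C\subseteq[\omega_1]^{<\omega}$: $F$ captures $\mathcal C$ if $|\mathcal C|\le n_l$ and $\mathcal C$ can be enumerated as $\{c_i\}_{i<|\mathcal C|}$ with $c_i\subseteq F_i$, $c_i\setminus R(F)\neq\emptyset$ and $\phi_i[c_0]=c_i$ where $\phi_i:F_0\to F_i$ is the increasing bijection. $\mathcal F$ is $n$-capturing if for every uncountable $S\subseteq[\omega_1]^{<\omega}$ and every $k\in\omega$ there are $\mathcal C\in[S]^n$, $l>k$ and $F\in\mathcal F_l$ capturing $\mathcal C$. $CA_n$ is the statement: for every type $\tau$ with $n\le n_k$ for all $k\ge1$ there is an $n$-capturing construction scheme over $\omega_1$ of type $\tau$. *)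

theory Defs
  imports Main "HOL-Library.Countable_Set"
begin

definition omega1_type :: "'a::wellorder itself \<Rightarrow> bool" where
  "omega1_type (T::'a itself) \<longleftrightarrow>
     uncountable (UNIV :: 'a set) \<and> (\<forall>x::'a. countable {y. y < x})"

definition seg_le :: "'a::linorder set \<Rightarrow> 'a set \<Rightarrow> bool" where
  "seg_le A B \<longleftrightarrow> A \<subseteq> B \<and> (\<forall>b\<in>B. \<forall>a\<in>A. b < a \<longrightarrow> b \<in> A)"

definition set_less :: "'a::linorder set \<Rightarrow> 'a set \<Rightarrow> bool" where
  "set_less A B \<longleftrightarrow> (\<forall>a\<in>A. \<forall>b\<in>B. a < b)"

text \<open>A type is given by m, n, r :: nat => nat; only m k (k>=0), n k, r k (k>=1) matter.\<close>
definition is_type :: "(nat \<Rightarrow> nat) \<Rightarrow> (nat \<Rightarrow> nat) \<Rightarrow> (nat \<Rightarrow> nat) \<Rightarrow> bool" where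
  "is_type m n r \<longleftrightarrow>
     m 0 = 1 \<and> (\<forall>k\<ge>1. n k \<ge> 2) \<and> (\<forall>x. infinite {k. k \<ge> 1 \<and> r k = x}) \<and>
     (\<forall>k. r (Suc k) < m k \<and> m (Suc k) = r (Suc k) + (m k - r (Suc k)) * n (Suc k))"

text \<open>rk_le F k E: every member of F properly below E has rank < k, i.e. rank E <= k.\<close>
inductive rk_le :: "'a set set \<Rightarrow> nat \<Rightarrow> 'a set \<Rightarrow> bool" for \<F> :: "'a set set" where
  "(\<forall>E\<in>\<F>. E \<subset> F \<longrightarrow> (\<exists>j<k. rk_le \<F> j E)) \<Longrightarrow> rk_le \<F> k F"

definition level :: "'a set set \<Rightarrow> nat \<Rightarrow> 'a set set" where
  "level \<F> k = {F \<in> \<F>. rk_le \<F> k F \<and> (\<forall>j<k. \<not> rk_le \<F> j F)}"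

definition is_decomp ::
  "'a::linorder set set \<Rightarrow> (nat \<Rightarrow> nat) \<Rightarrow> (nat \<Rightarrow> nat) \<Rightarrow> nat \<Rightarrow> 'a set \<Rightarrow> 'a set list \<Rightarrow> 'a set \<Rightarrow> bool"
  where
  "is_decomp \<F> n r k F Fs R \<longleftrightarrow>
     length Fs = n (Suc k) \<and> set Fs \<subseteq> level \<F> k \<and> F = \<Union>(set Fs) \<and>
     (\<forall>i j. i < j \<longrightarrow> j < length Fs \<longrightarrow> Fs ! i \<inter> Fs ! j = R) \<and>
     card R = r (Suc k) \<and>
     set_less R (Fs ! 0 - R) \<and>
     (\<forall>i. Suc i < length Fs \<longrightarrow> set_less (Fs ! i - R) (Fs ! Suc i - R))"

definition construction_scheme ::
  "'a::linorder set set \<Rightarrow> (nat \<Rightarrow> nat) \<Rightarrow> (nat \<Rightarrow> nat) \<Rightarrow> (nat \<Rightarrow> nat) \<Rightarrow> bool" where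
  "construction_scheme \<F> m n r \<longleftrightarrow>
     (\<forall>F\<in>\<F>. finite F) \<and>
     (\<forall>A. finite A \<longrightarrow> (\<exists>F\<in>\<F>. A \<subseteq> F)) \<and>
     (\<forall>k. \<forall>F\<in>level \<F> k. card F = m k) \<and>
     (\<forall>k. \<forall>E\<in>level \<F> k. \<forall>F\<in>level \<F> k. seg_le (E \<inter> F) E \<and> seg_le (E \<inter> F) F) \<and>
     (\<forall>k. \<forall>F\<in>level \<F> (Suc k). \<exists>!Fs. \<exists>R. is_decomp \<F> n r k F Fs R)"

definition blocks ::
  "'a::linorder set set \<Rightarrow> (nat \<Rightarrow> nat) \<Rightarrow> (nat \<Rightarrow> nat) \<Rightarrow> nat \<Rightarrow> 'a set \<Rightarrow> 'a set list" where
  "blocks \<F> n r k F = (THE Fs. \<exists>R. is_decomp \<F> n r k F Fs R)"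

definition root ::
  "'a::linorder set set \<Rightarrow> (nat \<Rightarrow> nat) \<Rightarrow> (nat \<Rightarrow> nat) \<Rightarrow> nat \<Rightarrow> 'a set \<Rightarrow> 'a set" where
  "root \<F> n r k F = (THE R. is_decomp \<F> n r k F (blocks \<F> n r k F) R)"

definition inc_map :: "'a::linorder set \<Rightarrow> 'a set \<Rightarrow> 'a \<Rightarrow> 'a" where
  "inc_map A B x = sorted_list_of_set B ! card {y\<in>A. y < x}"

definition captures ::
  "'a::linorder set set \<Rightarrow> (nat \<Rightarrow> nat) \<Rightarrow> (nat \<Rightarrow> nat) \<Rightarrow> nat \<Rightarrow> 'a set \<Rightarrow> 'a set set \<Rightarrow> bool" where
  "captures \<F> n r l F C \<longleftrightarrow>
     l \<ge> 1 \<and> F \<in> level \<F> l \<and> finite C \<and> card C \<le> n l \<and>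
     (let Fs = blocks \<F> n r (l - 1) F; R = root \<F> n r (l - 1) F in
      \<exists>cs. distinct cs \<and> set cs = C \<and>
        (\<forall>i<length cs. cs ! i \<subseteq> Fs ! i \<and> cs ! i - R \<noteq> {} \<and>
                        inc_map (Fs ! 0) (Fs ! i) ` (cs ! 0) = cs ! i))"

definition capturing ::
  "nat \<Rightarrow> 'a::linorder set set \<Rightarrow> (nat \<Rightarrow> nat) \<Rightarrow> (nat \<Rightarrow> nat) \<Rightarrow> bool" where
  "capturing N \<F> n r \<longleftrightarrow>
     (\<forall>S. (\<forall>s\<in>S. finite s) \<longrightarrow> uncountable S \<longrightarrow>
        (\<forall>k. \<exists>C\<subseteq>S. finite C \<and> card C = N \<and> (\<exists>l>k. \<exists>F. captures \<F> n r l F C)))"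

definition CA :: "nat \<Rightarrow> 'a::linorder itself \<Rightarrow> bool" where
  "CA N (T::'a itself) \<longleftrightarrow>
     (\<forall>m n r. is_type m n r \<longrightarrow> (\<forall>k\<ge>1. N \<le> n k) \<longrightarrow>
        (\<exists>\<F>::'a set set. construction_scheme \<F> m n r \<and> capturing N \<F> n r))"

definition pairs :: "'a set \<Rightarrow> 'a set set" where
  "pairs A = {e. e \<subseteq> A \<and> card e = 2}"

definition two_bounded :: "('a set \<Rightarrow> 'a) \<Rightarrow> bool" where
  "two_bounded c \<longleftrightarrow> (\<forall>\<xi>. finite {e\<in>pairs UNIV. c e = \<xi>} \<and> card {e\<in>pairs UNIV. c e = \<xi>} \<le> 2)"

definition injective_set :: "('a set \<Rightarrow> 'a) \<Rightarrow> 'a set \<Rightarrow> bool" where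
  "injective_set c A \<longleftrightarrow> inj_on c (pairs A)"

definition partial_order_on' :: "'p set \<Rightarrow> ('p \<Rightarrow> 'p \<Rightarrow> bool) \<Rightarrow> bool" where
  "partial_order_on' P le \<longleftrightarrow>
     (\<forall>p\<in>P. le p p) \<and>
     (\<forall>p\<in>P. \<forall>q\<in>P. \<forall>s\<in>P. le p q \<longrightarrow> le q s \<longrightarrow> le p s) \<and>
     (\<forall>p\<in>P. \<forall>q\<in>P. le p q \<longrightarrow> le q p \<longrightarrow> p = q)"

definition compatible :: "'p set \<Rightarrow> ('p \<Rightarrow> 'p \<Rightarrow> bool) \<Rightarrow> 'p \<Rightarrow> 'p \<Rightarrow> bool" where
  "compatible P le p q \<longleftrightarrow> (\<exists>s\<in>P. le s p \<and> le s q)"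

definition is_ccc :: "'p set \<Rightarrow> ('p \<Rightarrow> 'p \<Rightarrow> bool) \<Rightarrow> bool" where
  "is_ccc P le \<longleftrightarrow>
     (\<forall>A\<subseteq>P. (\<forall>p\<in>A. \<forall>q\<in>A. p \<noteq> q \<longrightarrow> \<not> compatible P le p q) \<longrightarrow> countable A)"

text \<open>A (nice) P-name for a subset of the ground ordinals is a relation N between
conditions and ordinals: the name {(check alpha, p) | N p alpha}.
forces_mem P le N q alpha: q forces check alpha to belong to that name
(the standard definition of the forcing relation for this atomic formula).\<close>
definition forces_mem ::
  "'p set \<Rightarrow> ('p \<Rightarrow> 'p \<Rightarrow> bool) \<Rightarrow> ('p \<Rightarrow> 'a \<Rightarrow> bool) \<Rightarrow> 'p \<Rightarrow> 'a \<Rightarrow> bool" where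
  "forces_mem P le N q \<alpha> \<longleftrightarrow>
     q \<in> P \<and> (\<forall>s\<in>P. le s q \<longrightarrow> (\<exists>t\<in>P. le t s \<and> (\<exists>p\<in>P. N p \<alpha> \<and> le t p)))"

text \<open>Every condition forces: the name is unbounded in omega_1 (for ccc P this is
equivalent to being forced uncountable, as omega_1 is preserved).\<close>
definition forces_unbounded ::
  "'p set \<Rightarrow> ('p \<Rightarrow> 'p \<Rightarrow> bool) \<Rightarrow> ('p \<Rightarrow> 'a::linorder \<Rightarrow> bool) \<Rightarrow> bool" where
  "forces_unbounded P le N \<longleftrightarrow>
     (\<forall>\<alpha>. \<forall>p\<in>P. \<exists>q\<in>P. le q p \<and> (\<exists>\<beta>>\<alpha>. forces_mem P le N q \<beta>))"

text \<open>Every condition forces: the name is an injective set for c, i.e. no condition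
forces two distinct pairs of the same colour into the name.\<close>
definition forces_injective ::
  "'p set \<Rightarrow> ('p \<Rightarrow> 'p \<Rightarrow> bool) \<Rightarrow> ('p \<Rightarrow> 'a \<Rightarrow> bool) \<Rightarrow> ('a set \<Rightarrow> 'a) \<Rightarrow> bool" where
  "forces_injective P le N c \<longleftrightarrow>
     (\<forall>e\<in>pairs UNIV. \<forall>e'\<in>pairs UNIV. e \<noteq> e' \<longrightarrow> c e = c e' \<longrightarrow>
        \<not> (\<exists>q\<in>P. \<forall>\<gamma>\<in>e \<union> e'. forces_mem P le N q \<gamma>))"

text \<open>ccc-destructible: some (nonempty) ccc partial order forces an uncountable
injective set. Posets are taken with carrier a set of subsets of the ground type
(i.e. of size at most 2^aleph_1).\<close>
definition ccc_destructible :: "('a::linorder set \<Rightarrow> 'a) \<Rightarrow> bool" where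
  "ccc_destructible c \<longleftrightarrow>
     (\<exists>(P::'a set set) le. P \<noteq> {} \<and> partial_order_on' P le \<and> is_ccc P le \<and>
        (\<exists>N. (\<forall>p \<alpha>. N p \<alpha> \<longrightarrow> p \<in> P) \<and>
             forces_unbounded P le N \<and> forces_injective P le N c))"

end

theory Submission
  imports Defs
begin

definition pos :: "'a::linorder set \<Rightarrow> 'a \<Rightarrow> nat" where
  "pos A x = card {y\<in>A. y < x}"

lemma pos_lt_card: "finite A \<Longrightarrow> x \<in> A \<Longrightarrow> pos A x < card A"
  unfolding pos_def by (rule psubset_card_mono) auto

lemma pos_mono: "finite A \<Longrightarrow> x \<in> A \<Longrightarrow> x < y \<Longrightarrow> pos A x < pos A y"
  unfolding pos_def by (rule psubset_card_mono) auto

lemma pos_inj: "finite A \<Longrightarrow> x \<in> A \<Longrightarrow> y \<in> A \<Longrightarrow> pos A x = pos A y \<Longrightarrow> x = y"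
  by (metis less_irrefl linorder_neqE pos_mono)

lemma pos_nth:
  assumes "finite B" "i < card B"
  shows "sorted_list_of_set B ! i \<in> B \<and> pos B (sorted_list_of_set B ! i) = i"
proof -
  let ?xs = "sorted_list_of_set B"
  have sw: "sorted_wrt (<) ?xs" by simp
  have len: "length ?xs = card B" by simp
  have mem: "?xs ! i \<in> B" using assms len
    by (metis nth_mem set_sorted_list_of_set)
  have "{y\<in>B. y < ?xs ! i} = (\<lambda>j. ?xs ! j) ` {..<i}"
  proof
    show "{y \<in> B. y < ?xs ! i} \<subseteq> (\<lambda>j. ?xs ! j) ` {..<i}"
    proof
      fix y assume y: "y \<in> {y \<in> B. y < ?xs ! i}"
      then have "y \<in> set ?xs" using assms by simp
      then obtain j where j: "j < length ?xs" "?xs ! j = y" by (metis in_set_conv_nth)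
      have "j < i"
      proof (rule ccontr)
        assume "\<not> j < i"
        then have "i \<le> j" by simp
        then have "?xs ! i \<le> ?xs ! j" using j sw
          by (metis order.order_iff_strict sorted_wrt_nth_less)
        then have "?xs ! i \<le> y" using j by simp
        then show False using y by (simp add: not_less[symmetric])
      qed
      then show "y \<in> (\<lambda>j. ?xs ! j) ` {..<i}" using j by auto
    qed
  next
    show "(\<lambda>j. ?xs ! j) ` {..<i} \<subseteq> {y \<in> B. y < ?xs ! i}"
    proof
      fix y assume "y \<in> (\<lambda>j. ?xs ! j) ` {..<i}"
      then obtain j where j: "j < i" "y = ?xs ! j" by auto
      then have "?xs ! j < ?xs ! i" using sw assms len sorted_wrt_nth_less by metis
      moreover have "?xs ! j \<in> B" using j assms len
        by (metis order.strict_trans nth_mem set_sorted_list_of_set)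
      ultimately show "y \<in> {y \<in> B. y < ?xs ! i}" using j by auto
    qed
  qed
  moreover have "inj_on (\<lambda>j. ?xs ! j) {..<i}"
    using assms len distinct_sorted_list_of_set[of B]
    by (auto simp: inj_on_def nth_eq_iff_index_eq)
  ultimately have "pos B (?xs ! i) = i" unfolding pos_def by (simp add: card_image)
  then show ?thesis using mem by simp
qed

lemma inc_map_props:
  assumes "finite A" "finite B" "card A = card B" "z \<in> A"
  shows "inc_map A B z \<in> B \<and> pos B (inc_map A B z) = pos A z"
  using pos_nth[OF assms(2), of "pos A z"] pos_lt_card[OF assms(1,4)] assms(3)
  unfolding inc_map_def pos_def by simp

lemma seg_pos:
  assumes "finite B" "R \<subseteq> B" "set_less R (B - R)" "w \<in> R"
  shows "pos B w = pos R w"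
proof -
  have "{y\<in>B. y < w} = {y\<in>R. y < w}"
  proof (intro equalityI subsetI)
    fix y assume y: "y \<in> {y\<in>B. y < w}"
    have "y \<in> R"
    proof (rule ccontr)
      assume "y \<notin> R"
      then have "w < y" using assms y unfolding set_less_def by auto
      then show False using y by auto
    qed
    then show "y \<in> {y\<in>R. y < w}" using y by auto
  qed (use assms in auto)
  then show ?thesis unfolding pos_def by simp
qed

lemma seg_pos2:
  assumes "finite B" "R \<subseteq> B" "set_less R (B - R)" "x \<in> B - R"
  shows "card R \<le> pos B x"
proof -
  have "R \<subseteq> {y\<in>B. y < x}" using assms unfolding set_less_def by auto
  then show ?thesis unfolding pos_def using assms(1) by (simp add: card_mono)
qed

locale blk =
  fixes A0 A1 A2 R :: "'a::linorder set" and c rr :: nat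
  assumes fin: "finite A0" "finite A1" "finite A2"
    and cards: "card A0 = c" "card A1 = c" "card A2 = c" "card R = rr" "rr < c"
    and ints: "A0 \<inter> A1 = R" "A0 \<inter> A2 = R" "A1 \<inter> A2 = R"
    and ord: "set_less R (A0 - R)" "set_less (A0 - R) (A1 - R)" "set_less (A1 - R) (A2 - R)"
begin

lemma sub: "R \<subseteq> A0" "R \<subseteq> A1" "R \<subseteq> A2" using ints by auto

lemma finR: "finite R" using sub fin finite_subset by blast

lemma cdiff: "card (A0 - R) = c - rr" "card (A1 - R) = c - rr" "card (A2 - R) = c - rr"
  using sub finR cards by (simp_all add: card_Diff_subset)

lemma ne: "A0 - R \<noteq> {}" "A1 - R \<noteq> {}" "A2 - R \<noteq> {}"
  using cdiff cards(5) by (metis card.empty zero_less_diff less_irrefl)+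

lemma ord2: "set_less (A0 - R) (A2 - R)" "set_less R (A1 - R)" "set_less R (A2 - R)"
proof -
  obtain w where w: "w \<in> A1 - R" using ne by blast
  show "set_less (A0 - R) (A2 - R)" using ord w unfolding set_less_def by (meson order.strict_trans)
  obtain v where v: "v \<in> A0 - R" using ne by blast
  show "set_less R (A1 - R)" using ord v unfolding set_less_def by (meson order.strict_trans)
  then show "set_less R (A2 - R)" using ord w unfolding set_less_def by (meson order.strict_trans)
qed

lemma posroot: "x \<in> A0 - R \<Longrightarrow> rr \<le> pos A0 x" "x \<in> A1 - R \<Longrightarrow> rr \<le> pos A1 x"
   "x \<in> A2 - R \<Longrightarrow> rr \<le> pos A2 x"
  using seg_pos2[OF fin(1) sub(1) ord(1)] seg_pos2[OF fin(2) sub(2) ord2(2)]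
    seg_pos2[OF fin(3) sub(3) ord2(3)] cards by auto

lemma posR: "w \<in> R \<Longrightarrow> pos A0 w = pos R w" "w \<in> R \<Longrightarrow> pos A1 w = pos R w"
   "w \<in> R \<Longrightarrow> pos A2 w = pos R w"
  using seg_pos[OF fin(1) sub(1) ord(1)] seg_pos[OF fin(2) sub(2) ord2(2)]
    seg_pos[OF fin(3) sub(3) ord2(3)] by auto

lemma posR_lt: "w \<in> R \<Longrightarrow> pos R w < rr"
  using pos_lt_card[OF finR] cards by auto

lemma posc: "x \<in> A0 \<Longrightarrow> pos A0 x < c" "x \<in> A1 \<Longrightarrow> pos A1 x < c" "x \<in> A2 \<Longrightarrow> pos A2 x < c"
  using pos_lt_card[OF fin(1)] pos_lt_card[OF fin(2)] pos_lt_card[OF fin(3)] cards by auto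

definition "G = A0 \<union> A1 \<union> A2"

lemma finG: "finite G" using fin G_def by simp

lemma slD: "set_less X Y \<Longrightarrow> a \<in> X \<Longrightarrow> b \<in> Y \<Longrightarrow> a < b"
  unfolding set_less_def by blast

lemma posG0: assumes "x \<in> A0 - R" shows "pos G x = pos A0 x"
proof -
  have "{y\<in>G. y < x} = {y\<in>A0. y < x}"
  proof (intro equalityI subsetI)
    fix y assume y: "y \<in> {y\<in>G. y < x}"
    then have yx: "y < x" and yG: "y \<in> A0 \<or> y \<in> A1 \<or> y \<in> A2" unfolding G_def by auto
    have "y \<in> A0"
    proof (cases "y \<in> R")
      case True then show ?thesis using sub by auto
    next
      case False
      have "y \<notin> A1"
      proof
        assume "y \<in> A1" then have "x < y" using slD[OF ord(2) assms] False by simp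
        then show False using yx by simp
      qed
      moreover have "y \<notin> A2"
      proof
        assume "y \<in> A2" then have "x < y" using slD[OF ord2(1) assms] False by simp
        then show False using yx by simp
      qed
      ultimately show ?thesis using yG by blast
    qed
    then show "y \<in> {y\<in>A0. y < x}" using yx by simp
  next
    fix y assume "y \<in> {y\<in>A0. y < x}"
    then show "y \<in> {y\<in>G. y < x}" unfolding G_def by simp
  qed
  then show ?thesis unfolding pos_def by simp
qed

lemma posG1: assumes "x \<in> A1 - R" shows "pos G x = pos A1 x + (c - rr)"
proof -
  have e: "{y\<in>G. y < x} = {y\<in>A1. y < x} \<union> (A0 - R)"
  proof (intro equalityI subsetI)
    fix y assume y: "y \<in> {y\<in>G. y < x}"
    then have yx: "y < x" and yG: "y \<in> A0 \<or> y \<in> A1 \<or> y \<in> A2" unfolding G_def by auto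
    have "y \<in> A1 \<or> y \<in> A0 - R"
    proof (cases "y \<in> R")
      case True then show ?thesis using sub by auto
    next
      case False
      have "y \<notin> A2"
      proof
        assume "y \<in> A2" then have "x < y" using slD[OF ord(3) assms] False by simp
        then show False using yx by simp
      qed
      then show ?thesis using yG False by blast
    qed
    then show "y \<in> {y\<in>A1. y < x} \<union> (A0 - R)" using yx by blast
  next
    fix y assume y: "y \<in> {y\<in>A1. y < x} \<union> (A0 - R)"
    show "y \<in> {y\<in>G. y < x}"
    proof (cases "y \<in> A0 - R")
      case True then have "y < x" using slD[OF ord(2) _ assms] by simp
      then show ?thesis using True unfolding G_def by simp
    next
      case False then show ?thesis using y unfolding G_def by blast
    qed
  qed
  have "card ({y\<in>A1. y < x} \<union> (A0 - R)) = card {y\<in>A1. y < x} + card (A0 - R)"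
    by (rule card_Un_disjoint) (use fin ints in auto)
  then show ?thesis unfolding pos_def using e cdiff by simp
qed

lemma posG2: assumes "x \<in> A2 - R" shows "pos G x = pos A2 x + 2 * (c - rr)"
proof -
  have e: "{y\<in>G. y < x} = ({y\<in>A2. y < x} \<union> (A0 - R)) \<union> (A1 - R)"
  proof (intro equalityI subsetI)
    fix y assume y: "y \<in> {y\<in>G. y < x}"
    then have yx: "y < x" and yG: "y \<in> A0 \<or> y \<in> A1 \<or> y \<in> A2" unfolding G_def by auto
    have "y \<in> A2 \<or> y \<in> A0 - R \<or> y \<in> A1 - R"
    proof (cases "y \<in> R")
      case True then show ?thesis using sub by auto
    next
      case False
      then show ?thesis using yG by blast
    qed
    then show "y \<in> ({y\<in>A2. y < x} \<union> (A0 - R)) \<union> (A1 - R)" using yx by blast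
  next
    fix y assume y: "y \<in> ({y\<in>A2. y < x} \<union> (A0 - R)) \<union> (A1 - R)"
    show "y \<in> {y\<in>G. y < x}"
    proof (cases "y \<in> A0 - R")
      case True then have "y < x" using slD[OF ord2(1) _ assms] by simp
      then show ?thesis using True unfolding G_def by simp
    next
      case F1: False
      show ?thesis
      proof (cases "y \<in> A1 - R")
        case True then have "y < x" using slD[OF ord(3) _ assms] by simp
        then show ?thesis using True unfolding G_def by simp
      next
        case False then show ?thesis using y F1 unfolding G_def by blast
      qed
    qed
  qed
  have "card (({y\<in>A2. y < x} \<union> (A0 - R)) \<union> (A1 - R)) = card ({y\<in>A2. y < x} \<union> (A0 - R)) + card (A1 - R)"
    by (rule card_Un_disjoint) (use fin ints in auto)
  moreover have "card ({y\<in>A2. y < x} \<union> (A0 - R)) = card {y\<in>A2. y < x} + card (A0 - R)"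
    by (rule card_Un_disjoint) (use fin ints in auto)
  ultimately show ?thesis unfolding pos_def using e cdiff by simp
qed

lemma incR:
  assumes "B = A1 \<or> B = A2" "z \<in> R"
  shows "inc_map A0 B z = z"
proof -
  have finB: "finite B" "card B = c" "R \<subseteq> B" "set_less R (B - R)" using assms fin cards sub ord2 by auto
  have z0: "z \<in> A0" using sub assms by auto
  have "inc_map A0 B z \<in> B \<and> pos B (inc_map A0 B z) = pos A0 z"
    using inc_map_props[OF fin(1) finB(1) _ z0] cards finB by simp
  moreover have "pos A0 z = pos B z" using posR assms(1) assms(2) by auto
  ultimately show ?thesis using pos_inj[OF finB(1), of "inc_map A0 B z" z] finB(3) assms(2) by auto
qed

lemma incN:
  assumes "B = A1 \<or> B = A2" "z \<in> A0 - R"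
  shows "inc_map A0 B z \<in> B - R \<and> pos B (inc_map A0 B z) = pos A0 z"
proof -
  have finB: "finite B" "card B = c" "R \<subseteq> B" "set_less R (B - R)" using assms fin cards sub ord2 by auto
  have z0: "z \<in> A0" using assms by auto
  have *: "inc_map A0 B z \<in> B \<and> pos B (inc_map A0 B z) = pos A0 z"
    using inc_map_props[OF fin(1) finB(1) _ z0] cards finB by simp
  have "inc_map A0 B z \<notin> R"
  proof
    assume a: "inc_map A0 B z \<in> R"
    then have "pos B (inc_map A0 B z) < rr" using posR posR_lt assms(1) by auto
    then show False using * posroot(1)[OF assms(2)] by simp
  qed
  then show ?thesis using * by simp
qed

end

lemma list3: "length xs = 3 \<Longrightarrow> xs = [xs!0, xs!1, xs!2]"
  by (cases xs; cases "tl xs"; cases "tl (tl xs)"; auto simp: numeral_3_eq_3)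

locale CS =
  fixes FF :: "'a::linorder set set" and m r :: "nat \<Rightarrow> nat"
  assumes cs: "construction_scheme FF m (\<lambda>_. 3) r"
    and rlt: "\<And>k. r (Suc k) < m k"
begin

abbreviation "bl k G \<equiv> blocks FF (\<lambda>_. 3) r k G"
abbreviation "rt k G \<equiv> root FF (\<lambda>_. 3) r k G"

lemma csE: "\<forall>F\<in>FF. finite F"
  "\<forall>A. finite A \<longrightarrow> (\<exists>F\<in>FF. A \<subseteq> F)"
  "\<forall>k. \<forall>F\<in>level FF k. card F = m k"
  "\<forall>k. \<forall>E\<in>level FF k. \<forall>F\<in>level FF k. seg_le (E \<inter> F) E \<and> seg_le (E \<inter> F) F"
  "\<forall>k. \<forall>F\<in>level FF (Suc k). \<exists>!Fs. \<exists>R. is_decomp FF (\<lambda>_. 3) r k F Fs R"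
  using cs unfolding construction_scheme_def by simp_all

lemma lev_in: "G \<in> level FF k \<Longrightarrow> G \<in> FF" unfolding level_def by simp

lemma lev_fin: "G \<in> level FF k \<Longrightarrow> finite G"
  using csE(1) lev_in by blast

lemma lev_card: "G \<in> level FF k \<Longrightarrow> card G = m k"
  using csE(3) by blast

lemma LC: assumes "E \<in> level FF k" "F \<in> level FF k" "y \<in> E" "y \<in> F" "x \<in> E" "x < y" shows "x \<in> F"
proof -
  have "seg_le (E \<inter> F) E" using csE(4) assms(1,2) by blast
  then show ?thesis using assms(3-6) unfolding seg_le_def by blast
qed

lemma pos_eq: assumes "E \<in> level FF k" "F \<in> level FF k" "y \<in> E" "y \<in> F"
  shows "pos E y = pos F y"
proof -
  have "{z\<in>E. z < y} = {z\<in>F. z < y}" using LC[OF assms(1,2,3,4)] LC[OF assms(2,1,4,3)] by blast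
  then show ?thesis unfolding pos_def by simp
qed

lemma dec: assumes "G \<in> level FF (Suc k)"
  shows "is_decomp FF (\<lambda>_. 3) r k G (bl k G) (rt k G)"
proof -
  have ex1: "\<exists>!Fs. \<exists>R. is_decomp FF (\<lambda>_. 3) r k G Fs R"
    using csE(5) assms by blast
  have "\<exists>R. is_decomp FF (\<lambda>_. 3) r k G (bl k G) R"
    unfolding blocks_def by (rule theI'[OF ex1])
  then obtain R where R: "is_decomp FF (\<lambda>_. 3) r k G (bl k G) R" by blast
  have uniq: "R' = (bl k G)!0 \<inter> (bl k G)!1" if "is_decomp FF (\<lambda>_. 3) r k G (bl k G) R'" for R'
    using that unfolding is_decomp_def by auto
  have "rt k G = R"
    unfolding root_def
  proof (rule the_equality)
    show "is_decomp FF (\<lambda>_. 3) r k G (bl k G) R" by (rule R)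
  next
    fix R' assume "is_decomp FF (\<lambda>_. 3) r k G (bl k G) R'"
    then show "R' = R" using uniq[of R'] uniq[of R] R by simp
  qed
  then show ?thesis using R by simp
qed

lemma decomp:
  assumes "G \<in> level FF (Suc k)"
  shows "bl k G = [bl k G!0, bl k G!1, bl k G!2]"
    "bl k G!0 \<in> level FF k" "bl k G!1 \<in> level FF k" "bl k G!2 \<in> level FF k"
    "G = bl k G!0 \<union> bl k G!1 \<union> bl k G!2"
    "blk (bl k G!0) (bl k G!1) (bl k G!2) (rt k G) (m k) (r (Suc k))"
proof -
  let ?Fs = "bl k G" let ?R = "rt k G"
  have d: "is_decomp FF (\<lambda>_. 3) r k G ?Fs ?R" using dec[OF assms] .
  have len: "length ?Fs = 3" using d unfolding is_decomp_def by simp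
  show l3: "?Fs = [?Fs!0, ?Fs!1, ?Fs!2]" using list3[OF len] .
  have st: "set ?Fs \<subseteq> level FF k" using d unfolding is_decomp_def by simp
  have "set ?Fs = {?Fs!0, ?Fs!1, ?Fs!2}" by (subst l3) simp
  then show i0: "?Fs!0 \<in> level FF k" and i1: "?Fs!1 \<in> level FF k" and i2: "?Fs!2 \<in> level FF k"
    using st by auto
  have "G = \<Union>(set ?Fs)" using d unfolding is_decomp_def by simp
  moreover have "set ?Fs = {?Fs!0, ?Fs!1, ?Fs!2}" by (subst l3) simp
  ultimately show "G = ?Fs!0 \<union> ?Fs!1 \<union> ?Fs!2" by auto
  have ints: "\<forall>i j. i < j \<longrightarrow> j < length ?Fs \<longrightarrow> ?Fs ! i \<inter> ?Fs ! j = ?R"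
    and cR: "card ?R = r (Suc k)" and o1: "set_less ?R (?Fs ! 0 - ?R)"
    and o2: "\<forall>i. Suc i < length ?Fs \<longrightarrow> set_less (?Fs ! i - ?R) (?Fs ! Suc i - ?R)"
    using d unfolding is_decomp_def by auto
  show "blk (?Fs!0) (?Fs!1) (?Fs!2) ?R (m k) (r (Suc k))"
  proof
    show "finite (?Fs!0)" "finite (?Fs!1)" "finite (?Fs!2)" using i0 i1 i2 lev_fin by auto
    show "card (?Fs!0) = m k" "card (?Fs!1) = m k" "card (?Fs!2) = m k" using i0 i1 i2 lev_card by auto
    show "card ?R = r (Suc k)" by (rule cR)
    show "r (Suc k) < m k" by (rule rlt)
    show "?Fs!0 \<inter> ?Fs!1 = ?R" using ints[rule_format, of 0 1] len by simp
    show "?Fs!0 \<inter> ?Fs!2 = ?R" using ints[rule_format, of 0 2] len by simp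
    show "?Fs!1 \<inter> ?Fs!2 = ?R" using ints[rule_format, of 1 2] len by simp
    show "set_less ?R (?Fs!0 - ?R)" by (rule o1)
    show "set_less (?Fs!0 - ?R) (?Fs!1 - ?R)" using o2[rule_format, of 0] len by simp
    show "set_less (?Fs!1 - ?R) (?Fs!2 - ?R)" using o2[rule_format, of 1] len by (simp add: numeral_2_eq_2)
  qed
qed

lemma descent:
  assumes "G \<in> level FF L" "y \<in> G" "k \<le> L"
  shows "\<exists>E\<in>level FF k. y \<in> E \<and> E \<subseteq> G"
  using assms
proof (induction L arbitrary: G y)
  case 0 then show ?case by auto
next
  case (Suc L)
  show ?case
  proof (cases "k = Suc L")
    case True then show ?thesis using Suc.prems by auto
  next
    case False
    then have kL: "k \<le> L" using Suc.prems by simp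
    have G: "G = bl L G!0 \<union> bl L G!1 \<union> bl L G!2" using decomp(5)[OF Suc.prems(1)] .
    then obtain B where B: "B \<in> level FF L" "y \<in> B" "B \<subseteq> G"
      using decomp(2,3,4)[OF Suc.prems(1)] Suc.prems(2) by blast
    then obtain E where "E\<in>level FF k" "y \<in> E" "E \<subseteq> B" using Suc.IH[OF B(1,2) kL] by blast
    then show ?thesis using B by blast
  qed
qed

lemma SL0:
  assumes I: "Bp \<inter> Bq = R" and lv: "Bp \<in> level FF L" "Bq \<in> level FF L"
    and x: "x \<in> Bp - R" and y: "y \<in> Bq - R"
    and E: "E \<in> level FF k" "k \<le> L" "x \<in> E" "y \<in> E"
  shows False
proof -
  have main: "False" if a: "a \<in> Ba - R" "b \<in> Bb - R"
     "a < b" "Ba \<inter> Bb = R" "Bb \<in> level FF L" "a \<in> E" "b \<in> E" for a b Ba Bb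
  proof -
    have bB: "b \<in> Bb" using a(2) by simp
    obtain E' where E': "E' \<in> level FF k" "b \<in> E'" "E' \<subseteq> Bb"
      using descent[OF a(5) bB E(2)] by blast
    have "a \<in> E'" using LC[OF E(1) E'(1) a(7) E'(2) a(6) a(3)] .
    then have "a \<in> Ba \<inter> Bb" using a(1) E'(3) by blast
    then show False using a(1,4) by blast
  qed
  have "x \<noteq> y" using x y I by blast
  then consider "x < y" | "y < x" using linorder_neqE by blast
  then show False
  proof cases
    case 1 then show ?thesis using main[OF x y 1 I lv(2) E(3,4)] by simp
  next
    case 2
    have I': "Bq \<inter> Bp = R" using I by blast
    show ?thesis using main[OF y x 2 I' lv(1) E(4,3)] by simp
  qed
qed

end

context CS begin

definition W :: "nat \<Rightarrow> 'a set \<Rightarrow> 'a \<Rightarrow> 'a \<Rightarrow> 'a \<Rightarrow> bool" where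
  "W k G x0 x1 x2 \<longleftrightarrow> G \<in> level FF (Suc k) \<and> x0 \<in> bl k G!0 - rt k G \<and> x1 \<in> bl k G!1 - rt k G
     \<and> x2 \<in> bl k G!2 - rt k G \<and> pos (bl k G!0) x0 = pos (bl k G!2) x2 \<and> pos (bl k G!1) x1 = pos (bl k G!2) x2"

lemma Wfacts:
  assumes "W k G x0 x1 x2"
  shows "x0 < x1" "x1 < x2" "x0 < x2" "x0 \<in> G" "x1 \<in> G" "x2 \<in> G"
    "pos G x0 + 2 * (m k - r (Suc k)) = pos G x2"
    "pos G x1 + (m k - r (Suc k)) = pos G x2"
proof -
  have G: "G \<in> level FF (Suc k)" using assms unfolding W_def by simp
  interpret b: blk "bl k G!0" "bl k G!1" "bl k G!2" "rt k G" "m k" "r (Suc k)" using decomp(6)[OF G] .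
  have GG: "b.G = G" using decomp(5)[OF G] b.G_def by simp
  have x: "x0 \<in> bl k G!0 - rt k G" "x1 \<in> bl k G!1 - rt k G" "x2 \<in> bl k G!2 - rt k G"
    "pos (bl k G!0) x0 = pos (bl k G!2) x2" "pos (bl k G!1) x1 = pos (bl k G!2) x2"
    using assms unfolding W_def by auto
  show "x0 < x1" using b.slD[OF b.ord(2) x(1) x(2)] .
  show "x1 < x2" using b.slD[OF b.ord(3) x(2) x(3)] .
  show "x0 < x2" using b.slD[OF b.ord2(1) x(1) x(3)] .
  show "x0 \<in> G" "x1 \<in> G" "x2 \<in> G" using x decomp(5)[OF G] by auto
  show "pos G x0 + 2 * (m k - r (Suc k)) = pos G x2"
    using b.posG0[OF x(1)] b.posG2[OF x(3)] x(4) GG by simp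
  show "pos G x1 + (m k - r (Suc k)) = pos G x2"
    using b.posG1[OF x(2)] b.posG2[OF x(3)] x(5) GG by simp
qed

lemma W_level_eq:
  assumes W1: "W k G x0 x1 x2" and W2: "W k' G' y0 y1 y2"
    and a: "a = x0 \<or> a = x1" and a': "a = y0 \<or> a = y1" and top: "x2 = y2"
  shows "k = k'"
proof -
  have less: False if "W k G x0 x1 x2" "W k' G' y0 y1 y2" "a = x0 \<or> a = x1" "a = y0 \<or> a = y1"
    "x2 = y2" "k < k'" for k G x0 x1 x2 k' G' y0 y1 y2
  proof -
    have G': "G' \<in> level FF (Suc k')" using that(2) unfolding W_def by simp
    interpret b: blk "bl k' G'!0" "bl k' G'!1" "bl k' G'!2" "rt k' G'" "m k'" "r (Suc k')" using decomp(6)[OF G'] .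
    have G: "G \<in> level FF (Suc k)" using that(1) unfolding W_def by simp
    have y: "y0 \<in> bl k' G'!0 - rt k' G'" "y1 \<in> bl k' G'!1 - rt k' G'" "y2 \<in> bl k' G'!2 - rt k' G'"
      using that(2) unfolding W_def by auto
    have inG: "a \<in> G" "x2 \<in> G" using Wfacts(4,5,6)[OF that(1)] that(3) by auto
    have sk: "Suc k \<le> k'" using that(6) by simp
    show False
    proof (cases "a = y0")
      case True
      show False using SL0[OF b.ints(2) decomp(2)[OF G'] decomp(4)[OF G'] _ y(3) G sk] y(1) True inG that(5) by simp
    next
      case False
      then have "a = y1" using that(4) by simp
      then show False using SL0[OF b.ints(3) decomp(3)[OF G'] decomp(4)[OF G'] _ y(3) G sk] y(2) inG that(5) by simp
    qed
  qed
  show ?thesis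
  proof (rule ccontr)
    assume "k \<noteq> k'"
    then consider "k < k'" | "k' < k" by linarith
    then show False
    proof cases
      case 1 then show ?thesis using less[OF W1 W2 a a' top] by simp
    next
      case 2 then show ?thesis using less[OF W2 W1 a' a top[symmetric]] by simp
    qed
  qed
qed

lemma W_uniq:
  assumes W1: "W k G x0 x1 x2" and W2: "W k' G' y0 y1 y2"
    and a: "a = x0 \<or> a = x1" and a': "a = y0 \<or> a = y1" and top: "x2 = y2"
  shows "x0 = y0 \<and> x1 = y1"
proof -
  have kk: "k = k'" using W_level_eq[OF W1 W2 a a' top] .
  have G: "G \<in> level FF (Suc k)" using W1 unfolding W_def by simp
  have G': "G' \<in> level FF (Suc k)" using W2 kk unfolding W_def by simp
  note f1 = Wfacts[OF W1] and f2 = Wfacts[OF W2[folded kk]]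
  have p2: "pos G x2 = pos G' x2" using pos_eq[OF G G' f1(6)] f2(6) top by simp
  have x0G': "x0 \<in> G'" using LC[OF G G' f1(6)] f2(6) top f1(4) f1(3) by simp
  have x1G': "x1 \<in> G'" using LC[OF G G' f1(6)] f2(6) top f1(5) f1(2) by simp
  have "pos G' x0 = pos G x0" using pos_eq[OF G' G x0G' f1(4)] .
  then have "pos G' x0 = pos G' y0" using f1(7) f2(7) p2 top by simp
  then have e0: "x0 = y0" using pos_inj[OF lev_fin[OF G'] x0G' f2(4)] by simp
  have "pos G' x1 = pos G x1" using pos_eq[OF G' G x1G' f1(5)] .
  then have "pos G' x1 = pos G' y1" using f1(8) f2(8) p2 top by simp
  then have e1: "x1 = y1" using pos_inj[OF lev_fin[OF G'] x1G' f2(5)] by simp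
  show ?thesis using e0 e1 by simp
qed

definition TW :: "'a set \<Rightarrow> 'a \<times> 'a \<times> 'a \<Rightarrow> bool" where
  "TW e t \<longleftrightarrow> (case t of (x0, x1, x2) \<Rightarrow> (\<exists>k G. W k G x0 x1 x2) \<and> (e = {x0, x2} \<or> e = {x1, x2}))"

lemma TW_uniq: assumes "TW e t" "TW e t'" shows "t = t'"
proof -
  obtain x0 x1 x2 where t: "t = (x0, x1, x2)" by (cases t) auto
  obtain y0 y1 y2 where t': "t' = (y0, y1, y2)" by (cases t') auto
  obtain k G where W1: "W k G x0 x1 x2" and e1: "e = {x0, x2} \<or> e = {x1, x2}" using assms(1) t unfolding TW_def by auto
  obtain k' G' where W2: "W k' G' y0 y1 y2" and e2: "e = {y0, y2} \<or> e = {y1, y2}" using assms(2) t' unfolding TW_def by auto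
  note f1 = Wfacts[OF W1] and f2 = Wfacts[OF W2]
  obtain a where a: "a = x0 \<or> a = x1" "a < x2" "e = {a, x2}" using e1 f1 by blast
  obtain b where b: "b = y0 \<or> b = y1" "b < y2" "e = {b, y2}" using e2 f2 by blast
  have "{a, x2} = {b, y2}" using a b by simp
  then have ab: "a = b \<and> x2 = y2" using a(2) b(2) by (auto simp: doubleton_eq_iff)
  then have "x0 = y0 \<and> x1 = y1" using W_uniq[OF W1 W2 a(1)] b(1) by simp
  then show ?thesis using t t' ab by simp
qed

end

locale CSJ = CS FF m r for FF :: "'a::linorder set set" and m r +
  fixes J :: "'a \<times> 'a \<times> 'a \<Rightarrow> 'a"
  assumes injJ: "inj J"
begin

definition col :: "'a set \<Rightarrow> 'a" where
  "col e = (if \<exists>t. TW e t then J (THE t. TW e t) else J (Min e, Min e, Max e))"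

lemma col_TW: "TW e t \<Longrightarrow> col e = J t"
  unfolding col_def using TW_uniq by (metis the_equality)

lemma TW_lt: assumes "TW e (x0, x1, x2)" shows "x0 < x1"
  using assms Wfacts(1) unfolding TW_def by auto

lemma col_W: assumes "W k G x0 x1 x2" shows "col {x0, x2} = col {x1, x2}"
proof -
  have "TW {x0, x2} (x0, x1, x2)" "TW {x1, x2} (x0, x1, x2)" using assms unfolding TW_def by auto
  then show ?thesis using col_TW by simp
qed

lemma pair_MinMax: assumes "card e = 2" shows "e = {Min e, Max e}" "Min e < Max e"
proof -
  obtain a b where ab: "a \<noteq> b" "e = {a, b}" using assms card_2_iff by metis
  show "e = {Min e, Max e}" using ab by (cases "a < b") (auto simp: min_def max_def)
  show "Min e < Max e" using ab by (cases "a < b") (auto simp: min_def max_def)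
qed

lemma col_cases:
  "(\<exists>x0 x1 x2. TW e (x0, x1, x2) \<and> col e = J (x0, x1, x2)) \<or>
   ((\<forall>t. \<not> TW e t) \<and> col e = J (Min e, Min e, Max e))"
proof (cases "\<exists>t. TW e t")
  case True
  then obtain t where t: "TW e t" by blast
  obtain x0 x1 x2 where "t = (x0, x1, x2)" by (cases t) auto
  then show ?thesis using t col_TW[OF t] by blast
next
  case False then show ?thesis unfolding col_def by auto
qed

lemma col_eq:
  assumes e: "card e = 2" and e': "card e' = 2" and ne: "e \<noteq> e'" and c: "col e = col e'"
  shows "\<exists>x0 x1 x2. TW e (x0, x1, x2) \<and> TW e' (x0, x1, x2)"
proof -
  have ij: "\<And>a b. J a = J b \<Longrightarrow> a = b" using injJ by (simp add: inj_eq)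
  consider (tt) x0 x1 x2 y0 y1 y2 where "TW e (x0, x1, x2)" "col e = J (x0, x1, x2)" "TW e' (y0, y1, y2)" "col e' = J (y0, y1, y2)"
    | (tp) x0 x1 x2 where "TW e (x0, x1, x2)" "col e = J (x0, x1, x2)" "col e' = J (Min e', Min e', Max e')"
    | (pt) y0 y1 y2 where "TW e' (y0, y1, y2)" "col e' = J (y0, y1, y2)" "col e = J (Min e, Min e, Max e)"
    | (pp) "col e = J (Min e, Min e, Max e)" "col e' = J (Min e', Min e', Max e')"
  proof -
    note A = col_cases[of e] and B = col_cases[of e']
    show thesis
    proof (cases "\<exists>x0 x1 x2. TW e (x0, x1, x2) \<and> col e = J (x0, x1, x2)")
      case True
      then obtain x0 x1 x2 where X: "TW e (x0, x1, x2)" "col e = J (x0, x1, x2)" by blast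
      show thesis
      proof (cases "\<exists>y0 y1 y2. TW e' (y0, y1, y2) \<and> col e' = J (y0, y1, y2)")
        case True
        then obtain y0 y1 y2 where "TW e' (y0, y1, y2)" "col e' = J (y0, y1, y2)" by blast
        then show thesis using that(1) X by blast
      next
        case False then show thesis using that(2) X B by blast
      qed
    next
      case F: False
      then have X: "col e = J (Min e, Min e, Max e)" using A by blast
      show thesis
      proof (cases "\<exists>y0 y1 y2. TW e' (y0, y1, y2) \<and> col e' = J (y0, y1, y2)")
        case True
        then obtain y0 y1 y2 where "TW e' (y0, y1, y2)" "col e' = J (y0, y1, y2)" by blast
        then show thesis using that(3) X by blast
      next
        case False then show thesis using that(4) X B by blast
      qed
    qed
  qed
  then show ?thesis
  proof cases
    case (tt x0 x1 x2 y0 y1 y2)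
    then have "J (x0, x1, x2) = J (y0, y1, y2)" using c by simp
    then have "(x0, x1, x2) = (y0, y1, y2)" by (rule ij)
    then show ?thesis using tt by auto
  next
    case (tp x0 x1 x2)
    then have "J (x0, x1, x2) = J (Min e', Min e', Max e')" using c by simp
    then have "(x0, x1, x2) = (Min e', Min e', Max e')" by (rule ij)
    then show ?thesis using TW_lt[OF tp(1)] by simp
  next
    case (pt y0 y1 y2)
    then have "J (y0, y1, y2) = J (Min e, Min e, Max e)" using c by simp
    then have "(y0, y1, y2) = (Min e, Min e, Max e)" by (rule ij)
    then show ?thesis using TW_lt[OF pt(1)] by simp
  next
    case pp
    then have "J (Min e, Min e, Max e) = J (Min e', Min e', Max e')" using c by simp
    then have "(Min e, Min e, Max e) = (Min e', Min e', Max e')" by (rule ij)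
    then have "e = e'" using pair_MinMax(1)[OF e] pair_MinMax(1)[OF e'] by simp
    then show ?thesis using ne by simp
  qed
qed

lemma col_eq_W:
  assumes e: "card e = 2" and e': "card e' = 2" and ne: "e \<noteq> e'" and c: "col e = col e'"
  shows "\<exists>k G x0 x1 x2. W k G x0 x1 x2 \<and> e \<union> e' = {x0, x1, x2}"
proof -
  obtain x0 x1 x2 where t: "TW e (x0, x1, x2)" "TW e' (x0, x1, x2)" using col_eq[OF assms] by blast
  then obtain k G where "W k G x0 x1 x2" unfolding TW_def by auto
  moreover have "e \<union> e' = {x0, x1, x2}"
  proof -
    have "e = {x0, x2} \<or> e = {x1, x2}" "e' = {x0, x2} \<or> e' = {x1, x2}" using t unfolding TW_def by auto
    then have "(e = {x0, x2} \<and> e' = {x1, x2}) \<or> (e = {x1, x2} \<and> e' = {x0, x2})" using ne by blast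
    then show ?thesis by blast
  qed
  ultimately show ?thesis by blast
qed

lemma two_bounded_col: "two_bounded col"
  unfolding two_bounded_def
proof
  fix \<xi>
  let ?S = "{e \<in> pairs UNIV. col e = \<xi>}"
  have "\<exists>K. finite K \<and> card K \<le> 2 \<and> ?S \<subseteq> K"
  proof (cases "?S = {}")
    case True then show ?thesis by (intro exI[of _ "{}"]) auto
  next
    case False
    then obtain e0 where e0: "e0 \<in> ?S" by blast
    then have ce0: "card e0 = 2" "col e0 = \<xi>" unfolding pairs_def by auto
    show ?thesis
    proof (cases "\<exists>t. TW e0 t")
      case True
      then obtain t where t: "TW e0 t" by blast
      obtain x0 x1 x2 where "t = (x0, x1, x2)" by (cases t) auto
      then have tw: "TW e0 (x0, x1, x2)" using t by simp
      have "?S \<subseteq> {{x0, x2}, {x1, x2}}"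
      proof
        fix e assume "e \<in> ?S"
        then have ce: "card e = 2" "col e = \<xi>" unfolding pairs_def by auto
        show "e \<in> {{x0, x2}, {x1, x2}}"
        proof (cases "e = e0")
          case True then show ?thesis using tw unfolding TW_def by auto
        next
          case False
          have "e0 \<noteq> e" "col e0 = col e" using False ce ce0 by auto
          then obtain y0 y1 y2 where "TW e0 (y0, y1, y2)" "TW e (y0, y1, y2)"
            using col_eq[OF ce0(1) ce(1)] by blast
          then have "(y0, y1, y2) = (x0, x1, x2)" using TW_uniq tw by blast
          then show ?thesis using \<open>TW e (y0, y1, y2)\<close> unfolding TW_def by auto
        qed
      qed
      moreover have "card {{x0, x2}, {x1, x2}} \<le> 2" by (simp add: card_insert_le_m1)
      moreover have "finite {{x0, x2}, {x1, x2}}" by simp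
      ultimately show ?thesis by (intro exI[of _ "{{x0, x2}, {x1, x2}}"]) simp
    next
      case plain: False
      have "?S \<subseteq> {e0}"
      proof
        fix e assume "e \<in> ?S"
        then have ce: "card e = 2" "col e = \<xi>" unfolding pairs_def by auto
        show "e \<in> {e0}"
        proof (rule ccontr)
          assume "e \<notin> {e0}"
          then have "e0 \<noteq> e" "col e0 = col e" using ce ce0 by auto
          then obtain y0 y1 y2 where "TW e0 (y0, y1, y2)"
            using col_eq[OF ce0(1) ce(1)] by blast
          then show False using plain by blast
        qed
      qed
      then show ?thesis by (intro exI[of _ "{e0}"]) auto
    qed
  qed
  then obtain K where K: "finite K" "card K \<le> 2" "?S \<subseteq> K" by blast
  have "finite ?S" using K(1,3) finite_subset by blast
  moreover have "card ?S \<le> 2" using card_mono[OF K(1,3)] K(2) by simp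
  ultimately show "finite ?S \<and> card ?S \<le> 2" by simp
qed

end

context CSJ begin

lemma W_not_inj: assumes "W k G x0 x1 x2" "{x0, x1, x2} \<subseteq> c" shows "\<not> injective_set col c"
proof
  assume inj: "injective_set col c"
  note f = Wfacts[OF assms(1)]
  have "x0 \<noteq> x2" "x1 \<noteq> x2" using f(2,3) by auto
  then have "card {x0, x2} = 2" "card {x1, x2} = 2" by auto
  then have p: "{x0, x2} \<in> pairs c" "{x1, x2} \<in> pairs c" using assms(2) unfolding pairs_def by auto
  have "col {x0, x2} = col {x1, x2}" using col_W[OF assms(1)] .
  then have "{x0, x2} = {x1, x2}" using inj p unfolding injective_set_def inj_on_def by blast
  then have "x0 \<in> {x1, x2}" by blast
  then show False using f(1,3) by auto
qed

lemma inj_iff: "injective_set col c \<longleftrightarrow> \<not> (\<exists>k G x0 x1 x2. W k G x0 x1 x2 \<and> {x0, x1, x2} \<subseteq> c)"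
proof
  assume i: "injective_set col c" show "\<not> (\<exists>k G x0 x1 x2. W k G x0 x1 x2 \<and> {x0, x1, x2} \<subseteq> c)"
  proof
    assume "\<exists>k G x0 x1 x2. W k G x0 x1 x2 \<and> {x0, x1, x2} \<subseteq> c"
    then obtain k G x0 x1 x2 where "W k G x0 x1 x2" "{x0, x1, x2} \<subseteq> c" by blast
    then show False using W_not_inj[of k G x0 x1 x2 c] i by simp
  qed
next
  assume nt: "\<not> (\<exists>k G x0 x1 x2. W k G x0 x1 x2 \<and> {x0, x1, x2} \<subseteq> c)"
  show "injective_set col c" unfolding injective_set_def inj_on_def
  proof (intro ballI impI)
    fix e e' assume e: "e \<in> pairs c" "e' \<in> pairs c" "col e = col e'"
    show "e = e'"
    proof (rule ccontr)
      assume "e \<noteq> e'"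
      moreover have "card e = 2" "card e' = 2" using e unfolding pairs_def by auto
      ultimately obtain k G x0 x1 x2 where "W k G x0 x1 x2" "e \<union> e' = {x0, x1, x2}"
        using col_eq_W[of e e'] e(3) by blast
      moreover have "e \<union> e' \<subseteq> c" using e unfolding pairs_def by auto
      ultimately have "W k G x0 x1 x2 \<and> {x0, x1, x2} \<subseteq> c" by simp
      then show False using nt by blast
    qed
  qed
qed

lemma capt_extract:
  assumes cap: "captures FF (\<lambda>_. 3) r l Fc C" and c3: "card C = 3"
  obtains k c0 c1 c2 where "l = Suc k" "Fc \<in> level FF (Suc k)" "C = {c0, c1, c2}" "c0 \<noteq> c1"
     "c0 \<subseteq> bl k Fc!0" "c1 \<subseteq> bl k Fc!1" "c2 \<subseteq> bl k Fc!2"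
     "c0 - rt k Fc \<noteq> {}" "c1 - rt k Fc \<noteq> {}" "c2 - rt k Fc \<noteq> {}"
     "inc_map (bl k Fc!0) (bl k Fc!1) ` c0 = c1" "inc_map (bl k Fc!0) (bl k Fc!2) ` c0 = c2"
proof -
  have l1: "l \<ge> 1" and Fc: "Fc \<in> level FF l" using cap unfolding captures_def by auto
  obtain k where k: "l = Suc k" using l1 by (cases l) auto
  have "\<exists>cs. distinct cs \<and> set cs = C \<and>
        (\<forall>i<length cs. cs ! i \<subseteq> bl k Fc ! i \<and> cs ! i - rt k Fc \<noteq> {} \<and>
                        inc_map (bl k Fc ! 0) (bl k Fc ! i) ` (cs ! 0) = cs ! i)"
    using cap k unfolding captures_def Let_def by simp
  then obtain cs where cs: "distinct cs" "set cs = C"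
    "\<forall>i<length cs. cs ! i \<subseteq> bl k Fc ! i \<and> cs ! i - rt k Fc \<noteq> {} \<and>
                        inc_map (bl k Fc ! 0) (bl k Fc ! i) ` (cs ! 0) = cs ! i" by blast
  have len: "length cs = 3" using distinct_card[OF cs(1)] cs(2) c3 by simp
  have l3: "cs = [cs!0, cs!1, cs!2]" using list3[OF len] .
  have "set cs = {cs!0, cs!1, cs!2}" by (subst l3) simp
  then have C: "C = {cs!0, cs!1, cs!2}" using cs(2) by simp
  have d: "cs!0 \<noteq> cs!1" using cs(1) len by (simp add: nth_eq_iff_index_eq)
  have i0: "cs ! 0 \<subseteq> bl k Fc ! 0 \<and> cs ! 0 - rt k Fc \<noteq> {}" using cs(3)[rule_format, of 0] len by simp
  have i1: "cs ! 1 \<subseteq> bl k Fc ! 1 \<and> cs ! 1 - rt k Fc \<noteq> {} \<and> inc_map (bl k Fc ! 0) (bl k Fc ! 1) ` (cs ! 0) = cs ! 1"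
    using cs(3)[rule_format, of 1] len by simp
  have i2: "cs ! 2 \<subseteq> bl k Fc ! 2 \<and> cs ! 2 - rt k Fc \<noteq> {} \<and> inc_map (bl k Fc ! 0) (bl k Fc ! 2) ` (cs ! 0) = cs ! 2"
    using cs(3)[rule_format, of 2] len by simp
  show ?thesis
    apply (rule that[of k "cs!0" "cs!1" "cs!2"])
    using k Fc C d i0 i1 i2 by simp_all
qed

end

locale CSJC = CSJ FF m r J for FF :: "'a::linorder set set" and m r J +
  assumes capt: "capturing 3 FF (\<lambda>_. 3) r"
begin

lemma capt_use:
  assumes "\<forall>s\<in>S. finite s" "uncountable S"
  shows "\<exists>C\<subseteq>S. card C = 3 \<and> (\<exists>l F. captures FF (\<lambda>_. 3) r l F C)"
proof -
  have "\<exists>C\<subseteq>S. finite C \<and> card C = 3 \<and> (\<exists>l>0. \<exists>F. captures FF (\<lambda>_. 3) r l F C)"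
    using capt[unfolded capturing_def, rule_format, of S 0] assms by blast
  then obtain C l F where "C \<subseteq> S" "card C = 3" "captures FF (\<lambda>_. 3) r l F C" by blast
  then show ?thesis by blast
qed

lemma no_unc_inj: assumes "injective_set col A" shows "countable A"
proof (rule ccontr)
  assume unc: "uncountable A"
  let ?S = "(\<lambda>a. {a}) ` A"
  have "inj_on (\<lambda>a. {a}) A" by (auto simp: inj_on_def)
  then have "uncountable ?S" using unc countable_image_inj_on by blast
  moreover have "\<forall>s\<in>?S. finite s" by auto
  ultimately have "\<exists>C\<subseteq>?S. card C = 3 \<and> (\<exists>l F. captures FF (\<lambda>_. 3) r l F C)" using capt_use[of ?S] by simp
  then obtain C l Fc where C: "C \<subseteq> ?S" "card C = 3" "captures FF (\<lambda>_. 3) r l Fc C"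
    by blast
  obtain k c0 c1 c2 where k: "l = Suc k" "Fc \<in> level FF (Suc k)" "C = {c0, c1, c2}" "c0 \<noteq> c1"
     "c0 \<subseteq> bl k Fc!0" "c1 \<subseteq> bl k Fc!1" "c2 \<subseteq> bl k Fc!2"
     "c0 - rt k Fc \<noteq> {}" "c1 - rt k Fc \<noteq> {}" "c2 - rt k Fc \<noteq> {}"
     "inc_map (bl k Fc!0) (bl k Fc!1) ` c0 = c1" "inc_map (bl k Fc!0) (bl k Fc!2) ` c0 = c2"
    by (rule capt_extract[OF C(3) C(2)])
  interpret b: blk "bl k Fc!0" "bl k Fc!1" "bl k Fc!2" "rt k Fc" "m k" "r (Suc k)" using decomp(6)[OF k(2)] .
  obtain a0 where a0: "c0 = {a0}" "a0 \<in> A" using C(1) k(3) by auto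
  have a0B: "a0 \<in> bl k Fc!0 - rt k Fc" using k(5,8) a0 by auto
  let ?a1 = "inc_map (bl k Fc!0) (bl k Fc!1) a0" and ?a2 = "inc_map (bl k Fc!0) (bl k Fc!2) a0"
  have c1: "c1 = {?a1}" and c2: "c2 = {?a2}" using k(11,12) a0 by auto
  have a12A: "?a1 \<in> A" "?a2 \<in> A" using C(1) k(3) c1 c2 by auto
  have n1: "?a1 \<in> bl k Fc!1 - rt k Fc \<and> pos (bl k Fc!1) ?a1 = pos (bl k Fc!0) a0" using b.incN[OF _ a0B] by simp
  have n2: "?a2 \<in> bl k Fc!2 - rt k Fc \<and> pos (bl k Fc!2) ?a2 = pos (bl k Fc!0) a0" using b.incN[OF _ a0B] by simp
  have w: "W k Fc a0 ?a1 ?a2" unfolding W_def using k(2) a0B n1 n2 by simp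
  have s: "{a0, ?a1, ?a2} \<subseteq> A" using a0 a12A by simp
  show False using W_not_inj[OF w s] assms by simp
qed

lemma union_free:
  assumes Fc: "Fc \<in> level FF (Suc kk)"
    and c0: "c0 \<subseteq> bl kk Fc!0" and c1: "inc_map (bl kk Fc!0) (bl kk Fc!1) ` c0 = c1"
    and f0: "injective_set col c0" and f1: "injective_set col c1"
  shows "injective_set col (c0 \<union> c1)"
proof -
  interpret b: blk "bl kk Fc!0" "bl kk Fc!1" "bl kk Fc!2" "rt kk Fc" "m kk" "r (Suc kk)" using decomp(6)[OF Fc] .
  let ?B0 = "bl kk Fc!0" and ?B1 = "bl kk Fc!1" and ?R = "rt kk Fc"
  let ?phi = "inc_map ?B0 ?B1"
  have c1B: "c1 \<subseteq> ?B1"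
  proof
    fix y assume "y \<in> c1"
    then have "y \<in> ?phi ` c0" using c1 by simp
    then obtain z where z: "z \<in> c0" "y = ?phi z" by blast
    show "y \<in> ?B1"
    proof (cases "z \<in> ?R")
      case True then have "?phi z = z" using b.incR[of ?B1 z] by simp
      then show ?thesis using True z b.sub(2) by auto
    next
      case False then have "z \<in> ?B0 - ?R" using z c0 by blast
      then show ?thesis using b.incN[of ?B1 z] z by simp
    qed
  qed
  have R01: "c1 \<inter> ?R \<subseteq> c0"
  proof
    fix y assume y: "y \<in> c1 \<inter> ?R"
    then have "y \<in> ?phi ` c0" using c1 by simp
    then obtain z where z: "z \<in> c0" "y = ?phi z" by blast
    show "y \<in> c0"
    proof (cases "z \<in> ?R")
      case True then show ?thesis using b.incR[of ?B1 z] z by simp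
    next
      case False then have "z \<in> ?B0 - ?R" using z c0 by blast
      then have "?phi z \<notin> ?R" using b.incN[of ?B1 z] by simp
      then show ?thesis using y z by simp
    qed
  qed
  have R10: "c0 \<inter> ?R \<subseteq> c1"
  proof
    fix y assume y: "y \<in> c0 \<inter> ?R"
    then have e: "?phi y = y" using b.incR[of ?B1 y] by simp
    have "?phi y \<in> ?phi ` c0" using y by blast
    then show "y \<in> c1" using c1 e by simp
  qed
  have nt0: "\<not> (\<exists>k G x0 x1 x2. W k G x0 x1 x2 \<and> {x0, x1, x2} \<subseteq> c0)" by (rule iffD1[OF inj_iff f0])
  have nt1: "\<not> (\<exists>k G x0 x1 x2. W k G x0 x1 x2 \<and> {x0, x1, x2} \<subseteq> c1)" by (rule iffD1[OF inj_iff f1])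
  have "\<not> (\<exists>k G x0 x1 x2. W k G x0 x1 x2 \<and> {x0, x1, x2} \<subseteq> c0 \<union> c1)"
  proof
    assume "\<exists>k G x0 x1 x2. W k G x0 x1 x2 \<and> {x0, x1, x2} \<subseteq> c0 \<union> c1"
    then obtain k G x0 x1 x2 where Wt: "W k G x0 x1 x2" and sub: "{x0, x1, x2} \<subseteq> c0 \<union> c1" by blast
    note f = Wfacts[OF Wt]
    show False
    proof (cases "x2 \<in> ?B0")
      case True
      have x2c0: "x2 \<in> c0"
      proof (cases "x2 \<in> c1")
        case True
        then have "x2 \<in> ?R" using c1B \<open>x2 \<in> ?B0\<close> b.ints(1) by blast
        then show ?thesis using R01 True by blast
      next
        case False then show ?thesis using sub by auto
      qed
      have low: "x \<in> c0" if "x \<in> c0 \<union> c1" "x < x2" for x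
      proof (cases "x \<in> c0")
        case False
        then have xc1: "x \<in> c1" using that by blast
        show ?thesis
        proof (cases "x \<in> ?R")
          case True then show ?thesis using R01 xc1 by blast
        next
          case xn: False
          then have xB: "x \<in> ?B1 - ?R" using xc1 c1B by blast
          have "x2 < x"
          proof (cases "x2 \<in> ?R")
            case True then show ?thesis using b.slD[OF b.ord2(2) True xB] by simp
          next
            case False then show ?thesis using b.slD[OF b.ord(2) _ xB] \<open>x2 \<in> ?B0\<close> by blast
          qed
          then show ?thesis using that(2) by simp
        qed
      qed simp
      have "{x0, x1, x2} \<subseteq> c0" using low[of x0] low[of x1] sub f(2,3) x2c0 by simp
      then have "W k G x0 x1 x2 \<and> {x0, x1, x2} \<subseteq> c0" using Wt by simp
      then show False using nt0 by blast
    next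
      case False
      then have x2c1: "x2 \<in> c1" using sub c0 by blast
      then have x2B: "x2 \<in> ?B1 - ?R" using c1B False b.sub(1) by blast
      have "\<not> (x0 \<in> c1 \<and> x1 \<in> c1)"
      proof
        assume "x0 \<in> c1 \<and> x1 \<in> c1"
        then have "W k G x0 x1 x2 \<and> {x0, x1, x2} \<subseteq> c1" using Wt x2c1 by simp
        then show False using nt1 by blast
      qed
      then obtain xj where xj: "xj = x0 \<or> xj = x1" "xj \<notin> c1" by blast
      have xjc0: "xj \<in> c0" using xj sub by blast
      have xjB: "xj \<in> ?B0 - ?R" using xjc0 xj(2) R10 c0 by blast
      have xjG: "xj \<in> G" and x2G: "x2 \<in> G" using f(4,5,6) xj(1) by auto
      have G: "G \<in> level FF (Suc k)" using Wt unfolding W_def by simp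
      interpret g: blk "bl k G!0" "bl k G!1" "bl k G!2" "rt k G" "m k" "r (Suc k)" using decomp(6)[OF G] .
      have Wx: "x0 \<in> bl k G!0 - rt k G" "x1 \<in> bl k G!1 - rt k G" "x2 \<in> bl k G!2 - rt k G"
        using Wt unfolding W_def by auto
      consider "k < kk" | "kk < k" | "k = kk" by linarith
      then show False
      proof cases
        case 1
        then have "Suc k \<le> kk" by simp
        then show False using SL0[OF b.ints(1) decomp(2)[OF Fc] decomp(3)[OF Fc] xjB x2B G _ xjG x2G] by simp
      next
        case 2
        then have le: "Suc kk \<le> k" by simp
        have xjF: "xj \<in> Fc" "x2 \<in> Fc" using xjB x2B decomp(5)[OF Fc] by auto
        show False
        proof (cases "xj = x0")
          case True
          then show False using SL0[OF g.ints(2) decomp(2)[OF G] decomp(4)[OF G] Wx(1) Wx(3) Fc le] xjF by simp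
        next
          case False
          then have "xj = x1" using xj(1) by simp
          then show False using SL0[OF g.ints(3) decomp(3)[OF G] decomp(4)[OF G] Wx(2) Wx(3) Fc le] xjF by simp
        qed
      next
        case 3
        have x2F: "x2 \<in> Fc" using x2B decomp(5)[OF Fc] by auto
        have GG: "g.G = G" using decomp(5)[OF G] g.G_def by simp
        have FF': "b.G = Fc" using decomp(5)[OF Fc] b.G_def by simp
        have pe: "pos G x2 = pos Fc x2" using pos_eq[OF G _ x2G x2F] Fc 3 by simp
        have pG: "pos G x2 = pos (bl k G!2) x2 + 2 * (m k - r (Suc k))" using g.posG2[OF Wx(3)] GG by simp
        have pG2: "r (Suc k) \<le> pos (bl k G!2) x2" using g.posroot(3)[OF Wx(3)] .
        have pF: "pos Fc x2 = pos ?B1 x2 + (m kk - r (Suc kk))" using b.posG1[OF x2B] FF' by simp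
        have pF2: "pos ?B1 x2 < m kk" using b.posc(2) x2B by blast
        have "r (Suc k) < m k" by (rule rlt)
        then show False using pe pG pG2 pF pF2 3 by simp
      qed
    qed
  qed
  then show ?thesis by (rule iffD2[OF inj_iff])
qed

end

lemma bound_countable:
  assumes unc: "uncountable (UNIV::'a::linorder set)" and cnt: "\<And>x::'a. countable {y. y < x}"
    and X: "countable (X::'a set)"
  shows "\<exists>z. \<forall>x\<in>X. x < z"
proof -
  let ?U = "\<Union>x\<in>X. insert x {y. y < x}"
  have "countable ?U" using X cnt by (intro countable_UN) auto
  then have "?U \<noteq> UNIV" using unc by auto
  then obtain z where z: "z \<notin> ?U" by blast
  have "\<forall>x\<in>X. x < z"
  proof
    fix x assume x: "x \<in> X"
    have "z \<notin> insert x {y. y < x}" using z x by blast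
    then show "x < z" by auto
  qed
  then show ?thesis by blast
qed

context CSJC begin

definition "PP = {p. finite p \<and> injective_set col p}"
definition "le = (\<lambda>p q::'a set. q \<subseteq> p)"

lemma ccc_PP: "is_ccc PP le"
  unfolding is_ccc_def
proof (intro allI impI)
  fix A assume A: "A \<subseteq> PP" and ac: "\<forall>p\<in>A. \<forall>q\<in>A. p \<noteq> q \<longrightarrow> \<not> compatible PP le p q"
  show "countable A"
  proof (rule ccontr)
    assume unc: "uncountable A"
    have fin: "\<forall>s\<in>A. finite s" using A unfolding PP_def by auto
    obtain C where C: "C \<subseteq> A" "card C = 3" and "\<exists>l F. captures FF (\<lambda>_. 3) r l F C"
      using capt_use[OF fin unc] by blast
    then obtain l Fc where cap: "captures FF (\<lambda>_. 3) r l Fc C" by blast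
    obtain k c0 c1 c2 where k: "l = Suc k" "Fc \<in> level FF (Suc k)" "C = {c0, c1, c2}" "c0 \<noteq> c1"
     "c0 \<subseteq> bl k Fc!0" "c1 \<subseteq> bl k Fc!1" "c2 \<subseteq> bl k Fc!2"
     "c0 - rt k Fc \<noteq> {}" "c1 - rt k Fc \<noteq> {}" "c2 - rt k Fc \<noteq> {}"
     "inc_map (bl k Fc!0) (bl k Fc!1) ` c0 = c1" "inc_map (bl k Fc!0) (bl k Fc!2) ` c0 = c2"
      by (rule capt_extract[OF cap C(2)])
    have inA: "c0 \<in> A" "c1 \<in> A" using C(1) k(3) by auto
    then have inP: "c0 \<in> PP" "c1 \<in> PP" using A by auto
    then have f: "injective_set col c0" "injective_set col c1" "finite c0" "finite c1" unfolding PP_def by auto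
    have "injective_set col (c0 \<union> c1)" by (rule union_free[OF k(2) k(5) k(11) f(1) f(2)])
    then have "c0 \<union> c1 \<in> PP" using f unfolding PP_def by simp
    then have "compatible PP le c0 c1" unfolding compatible_def le_def by blast
    then show False using ac inA k(4) by blast
  qed
qed

lemma single_PP: "{b} \<in> PP"
proof -
  have "pairs {b} = {}" unfolding pairs_def
  proof (intro equalityI subsetI)
    fix e assume "e \<in> {e. e \<subseteq> {b} \<and> card e = 2}"
    then have "e \<subseteq> {b}" "card e = 2" by auto
    then have "card e \<le> 1" using card_mono[of "{b}" e] by simp
    then show "e \<in> {}" using \<open>card e = 2\<close> by simp
  qed simp
  then show ?thesis unfolding PP_def injective_set_def by simp
qed

end

locale CSJCO = CSJC FF m r J for FF :: "'a::linorder set set" and m r J +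
  assumes unc: "uncountable (UNIV :: 'a set)" and cnt: "\<And>x::'a. countable {y. y < x}"
begin

lemma cone: "\<exists>p0\<in>PP. \<forall>p\<in>PP. p0 \<subseteq> p \<longrightarrow> (\<forall>\<alpha>. \<exists>q\<in>PP. p \<subseteq> q \<and> (\<exists>\<beta>\<in>q. \<alpha> < \<beta>))"
proof (rule ccontr)
  assume "\<not> ?thesis"
  then have H: "\<forall>p0\<in>PP. \<exists>p\<in>PP. p0 \<subseteq> p \<and> (\<exists>\<alpha>. \<forall>q\<in>PP. p \<subseteq> q \<longrightarrow> (\<forall>\<beta>\<in>q. \<beta> \<le> \<alpha>))"
    by (simp add: not_less)
  have "\<forall>b. \<exists>pa. fst pa \<in> PP \<and> b \<in> fst pa \<and> (\<forall>q\<in>PP. fst pa \<subseteq> q \<longrightarrow> (\<forall>\<beta>\<in>q. \<beta> \<le> snd pa))"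
  proof
    fix b
    have "\<exists>p\<in>PP. {b} \<subseteq> p \<and> (\<exists>\<alpha>. \<forall>q\<in>PP. p \<subseteq> q \<longrightarrow> (\<forall>\<beta>\<in>q. \<beta> \<le> \<alpha>))"
      using H single_PP[of b] by (rule bspec)
    then obtain p \<alpha> where p: "p \<in> PP" "{b} \<subseteq> p" "\<forall>q\<in>PP. p \<subseteq> q \<longrightarrow> (\<forall>\<beta>\<in>q. \<beta> \<le> \<alpha>)"
      by blast
    then show "\<exists>pa. fst pa \<in> PP \<and> b \<in> fst pa \<and> (\<forall>q\<in>PP. fst pa \<subseteq> q \<longrightarrow> (\<forall>\<beta>\<in>q. \<beta> \<le> snd pa))"
      by (intro exI[of _ "(p, \<alpha>)"]) simp
  qed
  from choice[OF this] obtain g where g: "\<forall>b. fst (g b) \<in> PP \<and> b \<in> fst (g b) \<and> (\<forall>q\<in>PP. fst (g b) \<subseteq> q \<longrightarrow> (\<forall>\<beta>\<in>q. \<beta> \<le> snd (g b)))"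
    by blast
  define d where "d b = fst (g b)" for b
  define f where "f b = snd (g b)" for b
  have gb: "d b \<in> PP \<and> b \<in> d b \<and> (\<forall>q\<in>PP. d b \<subseteq> q \<longrightarrow> (\<forall>\<beta>\<in>q. \<beta> \<le> f b))" for b
    using spec[OF g, of b] unfolding d_def f_def .
  have dP: "d b \<in> PP" and db: "b \<in> d b" for b using gb by auto
  have dbound: "\<not> f b < \<beta>" if "q \<in> PP" "d b \<subseteq> q" "\<beta> \<in> q" for q \<beta> b
    using gb[of b] that by (simp add: not_less)
  define AA where "AA = {B. \<forall>\<beta>\<in>B. \<forall>\<gamma>\<in>B. \<beta> < \<gamma> \<longrightarrow> f \<beta> < \<gamma>}"
  have "\<forall>C\<in>chains AA. \<Union>C \<in> AA"
  proof
    fix C assume C: "C \<in> chains AA"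
    show "\<Union>C \<in> AA" unfolding AA_def
    proof (intro CollectI ballI impI)
      fix \<beta> \<gamma> assume b: "\<beta> \<in> \<Union>C" and c: "\<gamma> \<in> \<Union>C" and bc: "\<beta> < \<gamma>"
      obtain X1 where X1: "X1 \<in> C" "\<beta> \<in> X1" using b by blast
      obtain X2 where X2: "X2 \<in> C" "\<gamma> \<in> X2" using c by blast
      have "X1 \<subseteq> X2 \<or> X2 \<subseteq> X1" using chainsD[OF C X1(1) X2(1)] .
      then obtain X where X: "X \<in> C" "\<beta> \<in> X" "\<gamma> \<in> X" using X1 X2 by blast
      have "X \<in> AA" using chainsD2[OF C] X(1) by blast
      then show "f \<beta> < \<gamma>" using X bc unfolding AA_def by blast
    qed
  qed
  then obtain M where M: "M \<in> AA" and Mmax: "\<forall>X\<in>AA. M \<subseteq> X \<longrightarrow> X = M"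
    using Zorn_Lemma[of AA] by blast
  have Mp: "\<And>\<beta> \<gamma>. \<beta> \<in> M \<Longrightarrow> \<gamma> \<in> M \<Longrightarrow> \<beta> < \<gamma> \<Longrightarrow> f \<beta> < \<gamma>" using M unfolding AA_def by blast
  have uncM: "uncountable M"
  proof
    assume cM: "countable M"
    then have "countable (M \<union> f ` M)" by simp
    then obtain z where z: "\<forall>x\<in>M \<union> f ` M. x < z" using bound_countable[OF unc cnt] by blast
    have "insert z M \<in> AA" unfolding AA_def
    proof (intro CollectI ballI impI)
      fix \<beta> \<gamma> assume b: "\<beta> \<in> insert z M" and c: "\<gamma> \<in> insert z M" and bc: "\<beta> < \<gamma>"
      show "f \<beta> < \<gamma>"
      proof (cases "\<gamma> = z")
        case True
        have "\<beta> \<in> M" using b bc True by auto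
        then show ?thesis using z True by auto
      next
        case False
        then have gM: "\<gamma> \<in> M" using c by simp
        have "\<beta> \<in> M"
        proof (rule ccontr)
          assume "\<beta> \<notin> M" then have "\<beta> = z" using b by simp
          have "\<gamma> < z" using z gM by blast
          then show False using \<open>\<beta> = z\<close> bc by simp
        qed
        then show ?thesis using Mp gM bc by blast
      qed
    qed
    then have "insert z M = M" using Mmax by blast
    then have "z \<in> M" by blast
    then show False using z by auto
  qed
  have ineq: "\<not> compatible PP le (d \<beta>) (d \<gamma>)" if "\<beta> \<in> M" "\<gamma> \<in> M" "\<beta> < \<gamma>" for \<beta> \<gamma>
  proof
    assume "compatible PP le (d \<beta>) (d \<gamma>)"
    then obtain s where s: "s \<in> PP" "d \<beta> \<subseteq> s" "d \<gamma> \<subseteq> s" unfolding compatible_def le_def by blast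
    have "\<gamma> \<in> s" using s(3) db by blast
    then have "\<not> f \<beta> < \<gamma>" using dbound[OF s(1) s(2)] by blast
    then show False using Mp[OF that] by blast
  qed
  have dne: "d \<beta> \<noteq> d \<gamma>" if "\<beta> \<in> M" "\<gamma> \<in> M" "\<beta> < \<gamma>" for \<beta> \<gamma>
  proof
    assume e: "d \<beta> = d \<gamma>"
    have "\<gamma> \<in> d \<beta>" using e db by simp
    then have "\<not> f \<beta> < \<gamma>" using dbound[OF dP order.refl] by blast
    then show False using Mp[OF that] by blast
  qed
  have injd: "inj_on d M"
  proof (rule inj_onI)
    fix \<beta> \<gamma> assume b: "\<beta> \<in> M" and c: "\<gamma> \<in> M" and e: "d \<beta> = d \<gamma>"
    show "\<beta> = \<gamma>"
    proof (rule ccontr)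
      assume "\<beta> \<noteq> \<gamma>"
      then consider "\<beta> < \<gamma>" | "\<gamma> < \<beta>" using linorder_neqE by blast
      then show False
      proof cases
        case 1 then show False using dne[OF b c] e by blast
      next
        case 2 then show False using dne[OF c b] e by metis
      qed
    qed
  qed
  have sub: "d ` M \<subseteq> PP" using dP by blast
  have pw: "\<forall>p\<in>d ` M. \<forall>q\<in>d ` M. p \<noteq> q \<longrightarrow> \<not> compatible PP le p q"
    proof (intro ballI impI)
      fix p q assume p: "p \<in> d ` M" and q: "q \<in> d ` M" and pq: "p \<noteq> q"
      obtain \<beta> where b: "\<beta> \<in> M" "p = d \<beta>" using p by blast
      obtain \<gamma> where c: "\<gamma> \<in> M" "q = d \<gamma>" using q by blast
      have "\<beta> \<noteq> \<gamma>" using pq b c by blast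
      then consider "\<beta> < \<gamma>" | "\<gamma> < \<beta>" using linorder_neqE by blast
      then show "\<not> compatible PP le p q"
      proof cases
        case 1 then show ?thesis using ineq[OF b(1) c(1)] b c by simp
      next
        case 2
        have "\<not> compatible PP le q p" using ineq[OF c(1) b(1) 2] b c by simp
        then show ?thesis unfolding compatible_def by blast
      qed
    qed
  have "countable (d ` M)" using ccc_PP sub pw unfolding is_ccc_def by blast
  then have "countable M" using countable_image_inj_on injd by blast
  then show False using uncM by blast
qed

lemma destructible: "ccc_destructible col"
proof -
  obtain p0 where p0: "p0 \<in> PP" and p0c: "\<forall>p\<in>PP. p0 \<subseteq> p \<longrightarrow> (\<forall>\<alpha>. \<exists>q\<in>PP. p \<subseteq> q \<and> (\<exists>\<beta>\<in>q. \<alpha> < \<beta>))"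
    using cone by blast
  define P' where "P' = {p\<in>PP. p0 \<subseteq> p}"
  define N where "N = (\<lambda>p (x::'a). p \<in> P' \<and> x \<in> p)"
  have ne: "P' \<noteq> {}" using p0 unfolding P'_def by blast
  have po: "partial_order_on' P' le" unfolding partial_order_on'_def le_def by auto
  have ccc: "is_ccc P' le" unfolding is_ccc_def
  proof (intro allI impI)
    fix A assume A: "A \<subseteq> P'" and ac: "\<forall>p\<in>A. \<forall>q\<in>A. p \<noteq> q \<longrightarrow> \<not> compatible P' le p q"
    have "A \<subseteq> PP" using A unfolding P'_def by blast
    moreover have "\<forall>p\<in>A. \<forall>q\<in>A. p \<noteq> q \<longrightarrow> \<not> compatible PP le p q"
    proof (intro ballI impI notI)
      fix p q assume p: "p \<in> A" and q: "q \<in> A" and pq: "p \<noteq> q" and c: "compatible PP le p q"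
      then obtain s where s: "s \<in> PP" "p \<subseteq> s" "q \<subseteq> s" unfolding compatible_def le_def by blast
      have "p0 \<subseteq> p" using p A unfolding P'_def by blast
      then have "s \<in> P'" using s unfolding P'_def by blast
      then have "compatible P' le p q" using s unfolding compatible_def le_def by blast
      then show False using ac p q pq by blast
    qed
    ultimately show "countable A" using ccc_PP unfolding is_ccc_def by blast
  qed
  have Nin: "\<forall>p \<alpha>. N p \<alpha> \<longrightarrow> p \<in> P'" unfolding N_def by simp
  have fm: "forces_mem P' le N q \<beta>" if "q \<in> P'" "\<beta> \<in> q" for q \<beta>
    unfolding forces_mem_def
  proof (intro conjI ballI impI)
    show "q \<in> P'" by (rule that(1))
    fix s assume s: "s \<in> P'" "le s q"
    show "\<exists>t\<in>P'. le t s \<and> (\<exists>p\<in>P'. N p \<beta> \<and> le t p)"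
      using s that unfolding N_def le_def by blast
  qed
  have unb: "forces_unbounded P' le N" unfolding forces_unbounded_def
  proof (intro allI ballI)
    fix \<alpha> p assume p: "p \<in> P'"
    then have "p \<in> PP" "p0 \<subseteq> p" unfolding P'_def by auto
    then have "\<exists>q\<in>PP. p \<subseteq> q \<and> (\<exists>\<beta>\<in>q. \<alpha> < \<beta>)" using p0c by blast
    then obtain q where q: "q \<in> PP" "p \<subseteq> q" "\<exists>\<beta>\<in>q. \<alpha> < \<beta>" by blast
    then obtain \<beta> where b: "\<beta> \<in> q" "\<alpha> < \<beta>" by blast
    have qP: "q \<in> P'" using q \<open>p0 \<subseteq> p\<close> unfolding P'_def by auto
    have "le q p" using q(2) unfolding le_def by simp
    then show "\<exists>q\<in>P'. le q p \<and> (\<exists>\<beta>>\<alpha>. forces_mem P' le N q \<beta>)"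
      using qP b(2) fm[OF qP b(1)] by blast
  qed
  have ext: "\<exists>t\<in>P'. q \<subseteq> t \<and> X \<subseteq> t" if "finite X" "q \<in> P'" "\<forall>\<gamma>\<in>X. forces_mem P' le N q \<gamma>" for X q
    using that
  proof (induction X rule: finite_induct)
    case empty then show ?case by blast
  next
    case (insert x X)
    have "\<forall>\<gamma>\<in>X. forces_mem P' le N q \<gamma>" using insert.prems by simp
    then have "\<exists>t\<in>P'. q \<subseteq> t \<and> X \<subseteq> t" using insert.IH insert.prems(1) by simp
    then obtain t where t: "t \<in> P'" "q \<subseteq> t" "X \<subseteq> t" by blast
    have "forces_mem P' le N q x" using insert.prems by simp
    then have "\<forall>s\<in>P'. le s q \<longrightarrow> (\<exists>t\<in>P'. le t s \<and> (\<exists>p\<in>P'. N p x \<and> le t p))" unfolding forces_mem_def by blast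
    moreover have "le t q" using t(2) unfolding le_def by simp
    ultimately have "\<exists>t'\<in>P'. le t' t \<and> (\<exists>p\<in>P'. N p x \<and> le t' p)" using t(1) by blast
    then obtain t' p where t': "t' \<in> P'" "le t' t" "p \<in> P'" "N p x" "le t' p" by blast
    then have "x \<in> t'" "t \<subseteq> t'" unfolding N_def le_def by auto
    then show ?case using t t' by blast
  qed
  have inj: "forces_injective P' le N col" unfolding forces_injective_def
  proof (intro ballI impI notI)
    fix e e' assume e: "e \<in> pairs UNIV" "e' \<in> pairs UNIV" "e \<noteq> e'" "col e = col e'"
      and ex: "\<exists>q\<in>P'. \<forall>\<gamma>\<in>e \<union> e'. forces_mem P' le N q \<gamma>"
    then obtain q where q: "q \<in> P'" "\<forall>\<gamma>\<in>e \<union> e'. forces_mem P' le N q \<gamma>" by blast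
    have ce: "card e = 2" "card e' = 2" using e unfolding pairs_def by auto
    then have "finite (e \<union> e')" by (metis card_eq_0_iff finite_UnI zero_neq_numeral)
    then obtain t where t: "t \<in> P'" "e \<union> e' \<subseteq> t" using ext[OF _ q] by blast
    then have ti: "injective_set col t" unfolding P'_def PP_def by simp
    have "e \<in> pairs t" "e' \<in> pairs t" using t ce unfolding pairs_def by auto
    then show False using ti e unfolding injective_set_def inj_on_def by blast
  qed
  show ?thesis unfolding ccc_destructible_def
    using ne po ccc Nin unb inj by blast
qed

end

definition rr0 :: "nat \<Rightarrow> nat" where "rr0 k = (case k of 0 \<Rightarrow> 0 | Suc j \<Rightarrow> fst (prod_decode j))"

fun mm0 :: "nat \<Rightarrow> nat" where
  "mm0 0 = 1"
| "mm0 (Suc k) = rr0 (Suc k) + (mm0 k - rr0 (Suc k)) * 3"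

lemma rr0_le: "rr0 (Suc k) \<le> k"
proof -
  have "fst (prod_decode k) \<le> prod_encode (fst (prod_decode k), snd (prod_decode k))"
    by (rule le_prod_encode_1)
  then show ?thesis unfolding rr0_def by simp
qed

lemma mm0_gt: "k < mm0 k"
proof (induction k)
  case 0 then show ?case by simp
next
  case (Suc k)
  have "rr0 (Suc k) \<le> k" by (rule rr0_le)
  then show ?case using Suc.IH by simp
qed

lemma rlt0: "rr0 (Suc k) < mm0 k" using rr0_le mm0_gt le_less_trans by blast

lemma type0: "is_type mm0 (\<lambda>_. 3) rr0"
  unfolding is_type_def
proof (intro conjI allI impI)
  show "mm0 0 = 1" by simp
  fix k :: nat show "2 \<le> (3::nat)" by simp
next
  fix x
  let ?f = "\<lambda>b. Suc (prod_encode (x, b))"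
  have "inj ?f" by (rule injI) simp
  then have inf: "infinite (range ?f)" by (rule range_inj_infinite)
  have sub: "range ?f \<subseteq> {k. k \<ge> 1 \<and> rr0 k = x}"
  proof
    fix k assume "k \<in> range ?f"
    then obtain b where "k = Suc (prod_encode (x, b))" by blast
    then show "k \<in> {k. k \<ge> 1 \<and> rr0 k = x}" unfolding rr0_def by simp
  qed
  show "infinite {k. k \<ge> 1 \<and> rr0 k = x}" using infinite_super[OF sub inf] .
next
  fix k
  show "rr0 (Suc k) < mm0 k" by (rule rlt0)
  show "mm0 (Suc k) = rr0 (Suc k) + (mm0 k - rr0 (Suc k)) * 3" by simp
qed

lemma pair_inj_ex:
  assumes "infinite (UNIV :: 'a set)"
  shows "\<exists>h :: 'a \<times> 'a \<Rightarrow> 'a. inj h"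
proof -
  note i = card_of_Times_same_infinite[OF assms]
  have "\<exists>f :: 'a \<times> 'a \<Rightarrow> 'a. inj_on f (UNIV \<times> UNIV) \<and> f ` (UNIV \<times> UNIV) \<subseteq> UNIV"
    using ordIso_iff_ordLeq[THEN iffD1, OF i] card_of_ordLeq[of "(UNIV :: 'a set) \<times> (UNIV :: 'a set)" "UNIV :: 'a set"] by simp
  then obtain h :: "'a \<times> 'a \<Rightarrow> 'a" where "inj_on h (UNIV \<times> UNIV)" by blast
  then show ?thesis by auto
qed

theorem mainTheorem8:
  assumes "omega1_type TYPE('a::wellorder)"
    and "CA 3 TYPE('a)"
  shows "\<exists>c :: 'a set \<Rightarrow> 'a.
           two_bounded c \<and>
           (\<forall>A. injective_set c A \<longrightarrow> countable A) \<and>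
           ccc_destructible c"
proof -
  have unc: "uncountable (UNIV :: 'a set)" and cnt: "\<And>x::'a. countable {y. y < x}"
    using assms(1) unfolding omega1_type_def by auto
  have "\<exists>FF::'a set set. construction_scheme FF mm0 (\<lambda>_. 3) rr0 \<and> capturing 3 FF (\<lambda>_. 3) rr0"
    using assms(2) type0 unfolding CA_def by auto
  then obtain FF :: "'a set set" where FF: "construction_scheme FF mm0 (\<lambda>_. 3) rr0" "capturing 3 FF (\<lambda>_. 3) rr0"
    by blast
  have "infinite (UNIV :: 'a set)" using unc countable_finite by blast
  then obtain h :: "'a \<times> 'a \<Rightarrow> 'a" where h: "inj h" using pair_inj_ex by blast
  define J where "J = (\<lambda>(a, b, c). h (a, h (b, c)))"
  have injJ: "inj J" unfolding J_def inj_def using h by (auto simp: inj_eq)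
  interpret X: CSJCO FF mm0 rr0 J
  proof
    show "construction_scheme FF mm0 (\<lambda>_. 3) rr0" by (rule FF(1))
    show "\<And>k. rr0 (Suc k) < mm0 k" by (rule rlt0)
    show "inj J" by (rule injJ)
    show "capturing 3 FF (\<lambda>_. 3) rr0" by (rule FF(2))
    show "uncountable (UNIV :: 'a set)" by (rule unc)
    show "\<And>x::'a. countable {y. y < x}" by (rule cnt)
  qed
  have "two_bounded X.col" by (rule X.two_bounded_col)
  moreover have "\<forall>A. injective_set X.col A \<longrightarrow> countable A" using X.no_unc_inj by blast
  moreover have "ccc_destructible X.col" by (rule X.destructible)
  ultimately show ?thesis by blast
qed

end
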